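(* Let $\mathbf{e}_0\in\mathbb{P}\mathrm{iez}$ with leading harmonic part $\mathbf{h}_0$ and $\mathbf{g}_0=\mathbf{e}_0-\mathbf{h}_0$. Then $$\min_{\mathbf{e}\in\overline{\Sigma}_{[\mathbb{O}^-]}}\|\mathbf{e}_0-\mathbf{e}\|^2=\|\mathbf{g}_0\|^2+\min_{\mathbf{h}\in\mathbb{H}^3(\mathbb{R}^3),\ \mathbf{d}_2'(\mathbf{h})=0}\|\mathbf{h}_0-\mathbf{h}\|^2,$$ and $\mathbf{e}$ is a minimizer of the left-hand problem if and only if $\mathbf{e}=\mathbf{h}$ with $\mathbf{h}$ a minimizer of $\|\mathbf{h}_0-\mathbf{h}\|^2$ over $\{\mathbf{h}\in\mathbb{H}^3(\mathbb{R}^3):\mathbf{d}_2'(\mathbf{h})=0\}$ (a 7-variable polynomial optimization problem).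
   Context: $\mathbb{P}\mathrm{iez}=\{\mathbf{e}\in\otimes^3\mathbb{R}^3: \mathrm{e}_{ijk}=\mathrm{e}_{ikj}\}$ with $\mathrm{O}(3)$-action $(g\cdot\mathbf{e})_{ijk}=g_{ia}g_{jb}g_{kc}\mathrm{e}_{abc}$ and norm $\|\mathbf{e}\|^2=\mathrm{e}_{ijk}\mathrm{e}_{ijk}$. $\mathbf{q}=(\delta_{ij})$. $(\mathbf{e}^s)_{ijk}=\frac13(\mathrm{e}_{ijk}+\mathrm{e}_{jik}+\mathrm{e}_{kji})$, $u_i=(\mathbf{e}^s)_{ikk}$, $(\mathbf{q}\odot\mathbf{u})_{ijk}=\frac13(\delta_{ij}u_k+\delta_{ik}u_j+\delta_{jk}u_i)$; the leading harmonic part of $\mathbf{e}$ is $\mathbf{h}=\mathbf{e}^s-\frac35\mathbf{q}\odot\mathbf{u}$. $\mathbb{H}^3(\mathbb{R}^3)$ is the 7-dimensional space of totally symmetric traceless third-order tensors. For $\mathbf{h}\in\mathbb{H}^3(\mathbb{R}^3)$: $(\mathbf{d}_2)_{ij}=h_{ikl}h_{klj}$, $\mathbf{d}_2'(\mathbf{h})=\mathbf{d}_2-\frac13\operatorname{tr}(\mathbf{d}_2)\mathbf{q}$. $\mathbb{O}^-\subset\mathrm{O}(3)$ is the group of orthogonal transformations preserving the regular tetrahedron with vertices $(1,1,1),(1,-1,-1),(-1,1,-1),(-1,-1,1)$. $\overline{\Sigma}_{[\mathbb{O}^-]}=\{\mathbf{e}\in\mathbb{P}\mathrm{iez}:\exists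 g\in\mathrm{O}(3),\ k\cdot\mathbf{e}=\mathbf{e}\ \forall k\in g\mathbb{O}^-g^{-1}\}$. *)

theory Defs
  imports "HOL-Analysis.Analysis"
begin

type_synonym tensor3 = "3 \<Rightarrow> 3 \<Rightarrow> 3 \<Rightarrow> real"
type_synonym tensor2 = "3 \<Rightarrow> 3 \<Rightarrow> real"

definition Piez :: "tensor3 set" where
  "Piez = {e. \<forall>i j k. e i j k = e i k j}"

definition tact :: "real^3^3 \<Rightarrow> tensor3 \<Rightarrow> tensor3" where
  "tact g e = (\<lambda>i j k. \<Sum>a\<in>UNIV. \<Sum>b\<in>UNIV. \<Sum>c\<in>UNIV.
      g$i$a * g$j$b * g$k$c * e a b c)"

definition tnorm2 :: "tensor3 \<Rightarrow> real" where
  "tnorm2 e = (\<Sum>i\<in>UNIV. \<Sum>j\<in>UNIV. \<Sum>k\<in>UNIV. (e i j k)^2)"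

definition kdelta :: "3 \<Rightarrow> 3 \<Rightarrow> real" where
  "kdelta i j = (if i = j then 1 else 0)"

definition tsym :: "tensor3 \<Rightarrow> tensor3" where
  "tsym e = (\<lambda>i j k. (e i j k + e j i k + e k j i) / 3)"

definition tvec_u :: "tensor3 \<Rightarrow> 3 \<Rightarrow> real" where
  "tvec_u e i = (\<Sum>k\<in>UNIV. tsym e i k k)"

definition qodot :: "(3 \<Rightarrow> real) \<Rightarrow> tensor3" where
  "qodot u = (\<lambda>i j k. (kdelta i j * u k + kdelta i k * u j + kdelta j k * u i) / 3)"

definition harm_part :: "tensor3 \<Rightarrow> tensor3" where
  "harm_part e = (\<lambda>i j k. tsym e i j k - 3/5 * qodot (tvec_u e) i j k)"

definition H3 :: "tensor3 set" where
  "H3 = {h. (\<forall>i j k. h i j k = h j i k \<and> h i j k = h i k j) \<and>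
            (\<forall>i. (\<Sum>k\<in>UNIV. h i k k) = 0)}"

definition d2 :: "tensor3 \<Rightarrow> tensor2" where
  "d2 h = (\<lambda>i j. \<Sum>k\<in>UNIV. \<Sum>l\<in>UNIV. h i k l * h k l j)"

definition d2' :: "tensor3 \<Rightarrow> tensor2" where
  "d2' h = (\<lambda>i j. d2 h i j - (\<Sum>k\<in>UNIV. d2 h k k) / 3 * kdelta i j)"

definition tetra_vertices :: "(real^3) set" where
  "tetra_vertices = {vector [1,1,1], vector [1,-1,-1], vector [-1,1,-1], vector [-1,-1,1]}"

definition Ominus :: "(real^3^3) set" where
  "Ominus = {k. orthogonal_matrix k \<and> (\<lambda>v. k *v v) ` tetra_vertices = tetra_vertices}"

definition Sigma_Ominus :: "tensor3 set" where
  "Sigma_Ominus = {e \<in> Piez. \<exists>g. orthogonal_matrix g \<and>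
      (\<forall>k\<in>Ominus. tact (g ** k ** transpose g) e = e)}"

end

theory Submission
  imports Defs
begin


definition m1 :: "real^3^3 \<Rightarrow> tensor3 \<Rightarrow> tensor3" where
 "m1 g e = (\<lambda>i j k. \<Sum>a\<in>UNIV. g$i$a * e a j k)"
definition m2 :: "real^3^3 \<Rightarrow> tensor3 \<Rightarrow> tensor3" where
 "m2 g e = (\<lambda>i j k. \<Sum>a\<in>UNIV. g$j$a * e i a k)"
definition m3 :: "real^3^3 \<Rightarrow> tensor3 \<Rightarrow> tensor3" where
 "m3 g e = (\<lambda>i j k. \<Sum>a\<in>UNIV. g$k$a * e i j a)"

lemma tact_modes: "tact g e = m1 g (m2 g (m3 g e))"
  unfolding tact_def m1_def m2_def m3_def
  by (simp add: sum_distrib_left mult_ac)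

lemma m1_comp: "m1 A (m1 B e) = m1 (A ** B) e"
  unfolding m1_def matrix_matrix_mult_def
  apply (rule ext)+ apply (simp add: sum_distrib_left sum_distrib_right mult_ac)
  by (rule sum.swap)
lemma m2_comp: "m2 A (m2 B e) = m2 (A ** B) e"
  unfolding m2_def matrix_matrix_mult_def
  apply (rule ext)+ apply (simp add: sum_distrib_left sum_distrib_right mult_ac)
  by (rule sum.swap)
lemma m3_comp: "m3 A (m3 B e) = m3 (A ** B) e"
  unfolding m3_def matrix_matrix_mult_def
  apply (rule ext)+ apply (simp add: sum_distrib_left sum_distrib_right mult_ac)
  by (rule sum.swap)
lemma m12: "m1 A (m2 B e) = m2 B (m1 A e)"
  unfolding m1_def m2_def
  apply (rule ext)+ apply (simp add: sum_distrib_left sum_distrib_right mult_ac)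
  by (rule sum.swap)
lemma m13: "m1 A (m3 B e) = m3 B (m1 A e)"
  unfolding m1_def m3_def
  apply (rule ext)+ apply (simp add: sum_distrib_left sum_distrib_right mult_ac)
  by (rule sum.swap)
lemma m23: "m2 A (m3 B e) = m3 B (m2 A e)"
  unfolding m2_def m3_def
  apply (rule ext)+ apply (simp add: sum_distrib_left sum_distrib_right mult_ac)
  by (rule sum.swap)

lemma tact_comp: "tact A (tact B e) = tact (A ** B) e"
  unfolding tact_modes
  by (simp add: m1_comp m2_comp m3_comp m12 m13 m23)

lemma mat1_sum: "(\<Sum>a\<in>UNIV. (mat 1 :: real^3^3)$i$a * f a) = f i"
proof -
  have "(\<Sum>a\<in>UNIV. (mat 1 :: real^3^3)$i$a * f a) = (\<Sum>a\<in>UNIV. if i = a then f a else 0)"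
    by (rule sum.cong) (auto simp: mat_def)
  then show ?thesis by simp
qed

lemma tact_id: "tact (mat 1) e = e"
  unfolding tact_def by (simp add: mat1_sum sum_distrib_left[symmetric] mult.assoc)

lemma orth_col: "orthogonal_matrix g \<Longrightarrow> (\<Sum>k\<in>UNIV. g$k$a * g$k$b) = (if a = b then 1 else 0)"
  unfolding orthogonal_matrix_def
  by (drule conjunct1) (auto simp: vec_eq_iff matrix_matrix_mult_def mat_def transpose_def dest!: spec[of _ a] spec[of _ b])

lemma orth_row: "orthogonal_matrix g \<Longrightarrow> (\<Sum>k\<in>UNIV. g$a$k * g$b$k) = (if a = b then 1 else 0)"
  using orth_col[OF orthogonal_matrix_transpose[THEN iffD2], of g a b] by (simp add: transpose_def)

lemma tact_scale: "tact g (\<lambda>i j k. c * e i j k) = (\<lambda>i j k. c * tact g e i j k)"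
  unfolding tact_def by (simp add: sum_distrib_left mult_ac)

lemma tact_Piez: "e \<in> Piez \<Longrightarrow> tact g e \<in> Piez"
  unfolding Piez_def tact_def
  apply clarsimp
  apply (rule sum.cong[OF refl])
  apply (subst (2) sum.swap) by (simp add: mult_ac)


lemma swap_out3: "(\<Sum>k\<in>U. \<Sum>a\<in>V. \<Sum>b\<in>W. \<Sum>c\<in>X. F k a b c) = (\<Sum>a\<in>V. \<Sum>b\<in>W. \<Sum>c\<in>X. \<Sum>k\<in>U. F k a b c)"
  apply (rule trans[OF sum.swap]) apply (rule sum.cong[OF refl])
  apply (rule trans[OF sum.swap]) apply (rule sum.cong[OF refl])
  by (rule sum.swap)

lemma swap_out2: "(\<Sum>k\<in>U. \<Sum>a\<in>V. \<Sum>b\<in>W. F k a b) = (\<Sum>a\<in>V. \<Sum>b\<in>W. \<Sum>k\<in>U. F k a b)"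
  apply (rule trans[OF sum.swap]) apply (rule sum.cong[OF refl])
  by (rule sum.swap)

lemma orth_col': "orthogonal_matrix g \<Longrightarrow> (\<Sum>k\<in>UNIV. g$k$a * g$k$b * c) = (if a = b then c else 0)"
  using orth_col[of g a b] by (simp add: sum_distrib_right[symmetric])
lemma orth_row': "orthogonal_matrix g \<Longrightarrow> (\<Sum>k\<in>UNIV. g$a$k * g$b$k * c) = (if a = b then c else 0)"
  using orth_row[of g a b] by (simp add: sum_distrib_right[symmetric])

lemma sum_if_eq: "(\<Sum>b\<in>UNIV. (if a = b then f b else 0)) = f (a::3)"
  by (simp add: if_distrib cong: if_cong)

lemma tact_H3:
  assumes g: "orthogonal_matrix g" and h: "h \<in> H3"
  shows "tact g h \<in> H3"
proof -
  have s1: "h a b c = h b a c" "h a b c = h a c b" for a b c using h by (auto simp: H3_def)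
  have tr: "(\<Sum>b\<in>UNIV. h a b b) = 0" for a using h by (auto simp: H3_def)
  have A: "tact g h i j k = tact g h j i k" for i j k
    unfolding tact_def apply (subst (2) sum.swap) apply (rule sum.cong[OF refl])+
    using s1(1) by (simp add: mult_ac)
  have B: "tact g h i j k = tact g h i k j" for i j k
    unfolding tact_def apply (rule sum.cong[OF refl]) apply (subst (2) sum.swap)
    apply (rule sum.cong[OF refl])+
    using s1(2) by (simp add: mult_ac)
  have C: "(\<Sum>k\<in>UNIV. tact g h i k k) = 0" for i
  proof -
    have "(\<Sum>k\<in>UNIV. tact g h i k k) = (\<Sum>a\<in>UNIV. \<Sum>b\<in>UNIV. \<Sum>c\<in>UNIV. \<Sum>k\<in>UNIV. g$k$b * g$k$c * (g$i$a * h a b c))"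
      unfolding tact_def by (subst swap_out3) (simp add: mult_ac)
    also have "\<dots> = (\<Sum>a\<in>UNIV. \<Sum>b\<in>UNIV. \<Sum>c\<in>UNIV. (if b = c then g$i$a * h a b c else 0))"
      by (simp add: orth_col'[OF g])
    also have "\<dots> = (\<Sum>a\<in>UNIV. g$i$a * (\<Sum>b\<in>UNIV. h a b b))"
      by (simp add: sum_distrib_left sum_if_eq)
    also have "\<dots> = 0" by (simp add: tr)
    finally show ?thesis .
  qed
  show ?thesis using A B C by (auto simp: H3_def)
qed


definition d2s :: "tensor3 \<Rightarrow> tensor2" where
  "d2s e = (\<lambda>i j. \<Sum>k\<in>UNIV. \<Sum>l\<in>UNIV. e i k l * e j k l)"

lemma swap22: "(\<Sum>k\<in>U. \<Sum>l\<in>V. \<Sum>a\<in>W. \<Sum>b\<in>X. F k l a b) = (\<Sum>a\<in>W. \<Sum>b\<in>X. \<Sum>k\<in>U. \<Sum>l\<in>V. F k l a b)"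
proof -
  have "(\<Sum>k\<in>U. \<Sum>l\<in>V. \<Sum>a\<in>W. \<Sum>b\<in>X. F k l a b) = (\<Sum>k\<in>U. \<Sum>a\<in>W. \<Sum>b\<in>X. \<Sum>l\<in>V. F k l a b)"
    by (rule sum.cong[OF refl]) (rule swap_out2)
  also have "\<dots> = (\<Sum>a\<in>W. \<Sum>b\<in>X. \<Sum>k\<in>U. \<Sum>l\<in>V. F k l a b)" by (rule swap_out2)
  finally show ?thesis .
qed

lemma d2_d2s: "h \<in> H3 \<Longrightarrow> d2 h = d2s h"
  unfolding d2_def d2s_def H3_def by (auto intro!: ext sum.cong)

lemma d2s_m1: "d2s (m1 g e) i j = (\<Sum>a\<in>UNIV. \<Sum>b\<in>UNIV. g$i$a * g$j$b * d2s e a b)"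
proof -
  have "d2s (m1 g e) i j = (\<Sum>k\<in>UNIV. \<Sum>l\<in>UNIV. \<Sum>a\<in>UNIV. \<Sum>b\<in>UNIV. g$i$a * g$j$b * (e a k l * e b k l))"
    unfolding d2s_def m1_def by (simp add: sum_product mult_ac)
  also have "\<dots> = (\<Sum>a\<in>UNIV. \<Sum>b\<in>UNIV. \<Sum>k\<in>UNIV. \<Sum>l\<in>UNIV. g$i$a * g$j$b * (e a k l * e b k l))"
    by (rule swap22)
  also have "\<dots> = (\<Sum>a\<in>UNIV. \<Sum>b\<in>UNIV. g$i$a * g$j$b * d2s e a b)"
    unfolding d2s_def by (simp add: sum_distrib_left)
  finally show ?thesis .
qed

lemma d2s_m2: assumes g: "orthogonal_matrix g" shows "d2s (m2 g e) = d2s e"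
proof (intro ext)
  fix i j
  have "d2s (m2 g e) i j = (\<Sum>k\<in>UNIV. \<Sum>l\<in>UNIV. \<Sum>a\<in>UNIV. \<Sum>b\<in>UNIV. g$k$a * g$k$b * (e i a l * e j b l))"
    unfolding d2s_def m2_def by (simp add: sum_product mult_ac)
  also have "\<dots> = (\<Sum>l\<in>UNIV. \<Sum>a\<in>UNIV. \<Sum>b\<in>UNIV. \<Sum>k\<in>UNIV. g$k$a * g$k$b * (e i a l * e j b l))"
    by (rule swap_out3)
  also have "\<dots> = (\<Sum>l\<in>UNIV. \<Sum>a\<in>UNIV. e i a l * e j a l)"
    by (simp add: orth_col'[OF g] sum_if_eq)
  also have "\<dots> = d2s e i j" unfolding d2s_def by (rule sum.swap)
  finally show "d2s (m2 g e) i j = d2s e i j" .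
qed

lemma d2s_m3: assumes g: "orthogonal_matrix g" shows "d2s (m3 g e) = d2s e"
proof (intro ext)
  fix i j
  have "d2s (m3 g e) i j = (\<Sum>k\<in>UNIV. \<Sum>l\<in>UNIV. \<Sum>a\<in>UNIV. \<Sum>b\<in>UNIV. g$l$a * g$l$b * (e i k a * e j k b))"
    unfolding d2s_def m3_def by (simp add: sum_product mult_ac)
  also have "\<dots> = (\<Sum>k\<in>UNIV. \<Sum>a\<in>UNIV. \<Sum>b\<in>UNIV. \<Sum>l\<in>UNIV. g$l$a * g$l$b * (e i k a * e j k b))"
    by (rule sum.cong[OF refl]) (rule swap_out2)
  also have "\<dots> = (\<Sum>k\<in>UNIV. \<Sum>a\<in>UNIV. e i k a * e j k a)"
    by (simp add: orth_col'[OF g] sum_if_eq)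
  also have "\<dots> = d2s e i j" unfolding d2s_def ..
  finally show "d2s (m3 g e) i j = d2s e i j" .
qed

lemma d2s_tact: assumes g: "orthogonal_matrix g"
  shows "d2s (tact g e) i j = (\<Sum>a\<in>UNIV. \<Sum>b\<in>UNIV. g$i$a * g$j$b * d2s e a b)"
  unfolding tact_modes d2s_m1 d2s_m2[OF g] d2s_m3[OF g] ..

lemma tnorm2_d2s: "tnorm2 e = (\<Sum>i\<in>UNIV. d2s e i i)"
  unfolding tnorm2_def d2s_def by (simp add: power2_eq_square)

lemma tnorm2_tact: assumes g: "orthogonal_matrix g" shows "tnorm2 (tact g e) = tnorm2 e"
proof -
  have "tnorm2 (tact g e) = (\<Sum>i\<in>UNIV. \<Sum>a\<in>UNIV. \<Sum>b\<in>UNIV. g$i$a * g$i$b * d2s e a b)"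
    unfolding tnorm2_d2s d2s_tact[OF g] ..
  also have "\<dots> = (\<Sum>a\<in>UNIV. \<Sum>b\<in>UNIV. \<Sum>i\<in>UNIV. g$i$a * g$i$b * d2s e a b)"
    by (rule swap_out2)
  also have "\<dots> = tnorm2 e" unfolding tnorm2_d2s by (simp add: orth_col'[OF g] sum_if_eq)
  finally show ?thesis .
qed



definition Xt :: tensor3 where "Xt = (\<lambda>i j k. if i \<noteq> j \<and> j \<noteq> k \<and> i \<noteq> k then 1 else 0)"

lemma num3: "(1::3) \<noteq> 2" "(1::3) \<noteq> 3" "(2::3) \<noteq> 3" "(2::3) \<noteq> 1" "(3::3) \<noteq> 1" "(3::3) \<noteq> 2"
  "(3::3) + 1 = 1" "(2::3) + 1 = 3" "(1::3) + 1 = 2"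
  by simp_all

lemma all3: "(\<forall>i::3. P i) \<longleftrightarrow> P 1 \<and> P 2 \<and> P 3" by (rule forall_3)

lemma Xt_H3: "Xt \<in> H3"
  unfolding H3_def Xt_def by (simp add: all3 sum_3)

lemma Xt_d2: "d2 Xt i j = 2 * kdelta i j"
  using exhaust_3[of i] exhaust_3[of j]
  by (elim disjE) (simp_all add: d2_def Xt_def sum_3 kdelta_def)

lemma Xt_d2': "d2' Xt = (\<lambda>i j. 0)"
  unfolding d2'_def by (simp add: Xt_d2 sum_3 kdelta_def)


lemma tetra_distinct:
  "vector [1,1,1] \<noteq> (vector [1,-1,-1] :: real^3)"
  "vector [1,1,1] \<noteq> (vector [-1,1,-1] :: real^3)"
  "vector [1,1,1] \<noteq> (vector [-1,-1,1] :: real^3)"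
  "vector [1,-1,-1] \<noteq> (vector [-1,1,-1] :: real^3)"
  "vector [1,-1,-1] \<noteq> (vector [-1,-1,1] :: real^3)"
  "vector [-1,1,-1] \<noteq> (vector [-1,-1,1] :: real^3)"
  by (auto simp: vec_eq_iff all3)

definition SV :: tensor3 where
  "SV = (\<lambda>i j k. \<Sum>v\<in>tetra_vertices. v$i * v$j * v$k)"

lemma SV_eq: "SV = (\<lambda>i j k. 4 * Xt i j k)"
proof (intro ext)
  fix i j k :: 3
  show "SV i j k = 4 * Xt i j k"
    unfolding SV_def tetra_vertices_def
    using exhaust_3[of i] exhaust_3[of j] exhaust_3[of k]
    by (elim disjE) (simp_all add: tetra_distinct Xt_def)
qed

lemma orth_inj: "orthogonal_matrix k \<Longrightarrow> inj (\<lambda>v::real^3. k *v v)"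
  unfolding inj_def orthogonal_matrix_def
  by (metis matrix_vector_mul_assoc matrix_vector_mul_lid)

lemma tact_SV:
  assumes k: "orthogonal_matrix k" "(\<lambda>v. k *v v) ` tetra_vertices = tetra_vertices"
  shows "tact k SV = SV"
proof (intro ext)
  fix i j l :: 3
  have "tact k SV i j l = (\<Sum>v\<in>tetra_vertices. (k *v v)$i * (k *v v)$j * (k *v v)$l)"
    unfolding tact_def SV_def matrix_vector_mult_def
    apply (simp add: sum_distrib_left sum_distrib_right sum.swap[of _ tetra_vertices] mult_ac)
    apply (rule sum.cong[OF refl]) apply (rule trans[OF sum.swap]) by (simp add: mult_ac)
  also have "\<dots> = (\<Sum>w\<in>(\<lambda>v. k *v v) ` tetra_vertices. w$i * w$j * w$l)"
    by (rule sum.reindex[symmetric, unfolded comp_def]) (rule inj_on_subset[OF orth_inj[OF k(1)]], simp)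
  also have "\<dots> = SV i j l" unfolding SV_def k(2) ..
  finally show "tact k SV i j l = SV i j l" .
qed

lemma tact_Xt:
  assumes "k \<in> Ominus" shows "tact k Xt = Xt"
proof -
  have "tact k (\<lambda>i j l. 4 * Xt i j l) = (\<lambda>i j l. 4 * Xt i j l)"
    using tact_SV[of k] assms SV_eq by (simp add: Ominus_def)
  then show ?thesis by (simp add: tact_scale fun_eq_iff)
qed


definition dg :: "(3 \<Rightarrow> real) \<Rightarrow> real^3^3" where
  "dg s = (\<chi> i a. if i = a then s i else 0)"
definition Pm :: "real^3^3" where
  "Pm = (\<chi> i a. if a = i + 1 then 1 else 0)"
definition s1 :: "3 \<Rightarrow> real" where "s1 i = (if i = 1 then 1 else -1)"
definition s2 :: "3 \<Rightarrow> real" where "s2 i = (if i = 2 then 1 else -1)"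

lemma dg_sum: "(\<Sum>a\<in>UNIV. dg s $ i $ a * F a) = s i * F i"
proof -
  have "(\<Sum>a\<in>UNIV. dg s $ i $ a * F a) = (\<Sum>a\<in>UNIV. if i = a then s i * F a else 0)"
    by (rule sum.cong) (auto simp: dg_def)
  then show ?thesis by simp
qed

lemma Pm_sum: "(\<Sum>a\<in>UNIV. Pm $ i $ a * F a) = F (i + 1)"
proof -
  have "(\<Sum>a\<in>UNIV. Pm $ i $ a * F a) = (\<Sum>a\<in>UNIV. if i + 1 = a then F a else 0)"
    by (rule sum.cong) (auto simp: Pm_def)
  then show ?thesis by simp
qed

lemma tact_dg: "tact (dg s) e i j k = s i * s j * s k * e i j k"
  unfolding tact_def by (simp add: dg_sum sum_distrib_left[symmetric] mult.assoc)

lemma tact_Pm: "tact Pm e i j k = e (i+1) (j+1) (k+1)"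
  unfolding tact_def by (simp add: Pm_sum sum_distrib_left[symmetric] mult.assoc)

lemma num4: "(4::3) = 1" by simp

lemma dg_mv: "dg s *v vector [x,y,z] = vector [s 1 * x, s 2 * y, s 3 * z]"
  by (simp add: vec_eq_iff all3 matrix_vector_mult_def sum_3 dg_def)

lemma Pm_mv: "Pm *v vector [x,y,z] = (vector [y,z,x] :: real^3)"
  by (simp add: vec_eq_iff all3 matrix_vector_mult_def sum_3 Pm_def num4)

lemma dg_orth: "s 1 * s 1 = 1 \<Longrightarrow> s 2 * s 2 = 1 \<Longrightarrow> s 3 * s 3 = 1 \<Longrightarrow> orthogonal_matrix (dg s)"
  unfolding orthogonal_matrix
  by (simp add: vec_eq_iff all3 matrix_matrix_mult_def transpose_def mat_def sum_3 dg_def)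

lemma Pm_orth: "orthogonal_matrix Pm"
  unfolding orthogonal_matrix
  by (simp add: vec_eq_iff all3 matrix_matrix_mult_def transpose_def mat_def sum_3 Pm_def num4)

lemma dg1_Om: "dg s1 \<in> Ominus"
  unfolding Ominus_def tetra_vertices_def
  by (auto simp: dg_orth s1_def dg_mv)

lemma dg2_Om: "dg s2 \<in> Ominus"
  unfolding Ominus_def tetra_vertices_def
  by (auto simp: dg_orth s2_def dg_mv)

lemma Pm_Om: "Pm \<in> Ominus"
  unfolding Ominus_def tetra_vertices_def
  by (auto simp: Pm_orth Pm_mv)


lemma fix_Xt:
  assumes P: "e \<in> Piez" and F: "\<forall>k\<in>Ominus. tact k e = e"
  shows "e = (\<lambda>i j k. e 1 2 3 * Xt i j k)"
proof -
  have f1: "s1 i * s1 j * s1 k * e i j k = e i j k" for i j k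
    using F dg1_Om by (metis tact_dg)
  have f2: "s2 i * s2 j * s2 k * e i j k = e i j k" for i j k
    using F dg2_Om by (metis tact_dg)
  have fP: "e (i+1) (j+1) (k+1) = e i j k" for i j k
    using F Pm_Om by (metis tact_Pm)
  have z1: "e i j k = 0" if "s1 i * s1 j * s1 k = -1" for i j k
    using f1[of i j k] that by simp
  have z2: "e i j k = 0" if "s2 i * s2 j * s2 k = -1" for i j k
    using f2[of i j k] that by simp
  have c1: "e 2 3 1 = e 1 2 3" using fP[of 1 2 3] by (simp add: num4)
  have c2: "e 3 1 2 = e 1 2 3" using fP[of 2 3 1] c1 by (simp add: num4)
  have p: "e i j k = e i k j" for i j k using P by (auto simp: Piez_def)
  show ?thesis
  proof (intro ext)
    fix i j k :: 3
    show "e i j k = e 1 2 3 * Xt i j k"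
      using exhaust_3[of i] exhaust_3[of j] exhaust_3[of k]
      by (elim disjE) (simp_all add: Xt_def z1 z2 s1_def s2_def c1 c2 p[of 1 3 2] p[of 2 1 3] p[of 3 2 1])
  qed
qed

lemma d2'_zero_iff: "d2' h = (\<lambda>i j. 0) \<longleftrightarrow> (\<forall>i j. d2 h i j = (\<Sum>k\<in>UNIV. d2 h k k) / 3 * kdelta i j)"
  unfolding d2'_def by (auto simp: fun_eq_iff)

lemma T_tact:
  assumes g: "orthogonal_matrix g" and h: "h \<in> H3" and z: "d2' h = (\<lambda>i j. 0)"
  shows "tact g h \<in> H3" "d2' (tact g h) = (\<lambda>i j. 0)"
proof -
  show H: "tact g h \<in> H3" using tact_H3[OF g h] .
  define L where "L = (\<Sum>k\<in>UNIV. d2 h k k) / 3"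
  have dh: "d2s h a b = L * kdelta a b" for a b using z d2_d2s[OF h] unfolding d2'_zero_iff L_def by metis
  have E: "d2 (tact g h) i j = L * kdelta i j" for i j
  proof -
    have "d2 (tact g h) i j = (\<Sum>a\<in>UNIV. \<Sum>b\<in>UNIV. g$i$a * g$j$b * (L * kdelta a b))"
      unfolding d2_d2s[OF H] d2s_tact[OF g] dh ..
    also have "\<dots> = (\<Sum>a\<in>UNIV. g$i$a * g$j$a * L)"
      by (simp add: kdelta_def if_distrib sum_if_eq cong: if_cong)
    also have "\<dots> = L * kdelta i j" using orth_row'[OF g, of i j L] by (simp add: kdelta_def mult_ac)
    finally show ?thesis .
  qed
  have tr: "(\<Sum>k\<in>UNIV. d2 (tact g h) k k) = 3 * L" by (simp add: E sum_3 kdelta_def)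
  show "d2' (tact g h) = (\<lambda>i j. 0)" unfolding d2'_zero_iff tr using E by (simp add: sum_3 kdelta_def)
qed


lemma scale_H3: "h \<in> H3 \<Longrightarrow> (\<lambda>i j k. c * h i j k) \<in> H3"
  unfolding H3_def by (auto simp: sum_distrib_left[symmetric])

lemma scale_d2: "d2 (\<lambda>i j k. c * h i j k) = (\<lambda>i j. c^2 * d2 h i j)"
  unfolding d2_def by (auto simp: sum_distrib_left power2_eq_square mult_ac intro!: ext)

lemma scale_d2': "d2' h = (\<lambda>i j. 0) \<Longrightarrow> d2' (\<lambda>i j k. c * h i j k) = (\<lambda>i j. 0)"
  unfolding d2'_zero_iff scale_d2 by (simp add: sum_distrib_left[symmetric])

lemma orth_tt: "orthogonal_matrix g \<Longrightarrow> transpose g ** g = mat 1" "orthogonal_matrix g \<Longrightarrow> g ** transpose g = mat 1"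
  by (auto simp: orthogonal_matrix_def)

lemma Sigma_sub_T:
  assumes "e \<in> Sigma_Ominus" shows "e \<in> H3 \<and> d2' e = (\<lambda>i j. 0)"
proof -
  from assms obtain g where P: "e \<in> Piez" and g: "orthogonal_matrix g"
    and F: "\<forall>k\<in>Ominus. tact (g ** k ** transpose g) e = e" by (auto simp: Sigma_Ominus_def)
  define e' where "e' = tact (transpose g) e"
  have P': "e' \<in> Piez" unfolding e'_def by (rule tact_Piez[OF P])
  have F': "\<forall>k\<in>Ominus. tact k e' = e'"
  proof
    fix k assume k: "k \<in> Ominus"
    have "tact k e' = tact (k ** transpose g) e" unfolding e'_def tact_comp ..
    also have "k ** transpose g = transpose g ** (g ** k ** transpose g)"
      by (simp add: matrix_mul_assoc orth_tt[OF g])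
    also have "tact \<dots> e = tact (transpose g) (tact (g ** k ** transpose g) e)" unfolding tact_comp ..
    also have "\<dots> = e'" using F k e'_def by simp
    finally show "tact k e' = e'" .
  qed
  have e'X: "e' = (\<lambda>i j k. e' 1 2 3 * Xt i j k)" by (rule fix_Xt[OF P' F'])
  have "e = tact g e'" unfolding e'_def tact_comp orth_tt[OF g] tact_id ..
  also have "\<dots> = tact g (\<lambda>i j k. e' 1 2 3 * Xt i j k)" using e'X by simp
  finally have ee: "e = \<dots>" .
  show ?thesis unfolding ee
    using T_tact[OF g scale_H3[OF Xt_H3] scale_d2'[OF Xt_d2']] by simp
qed

lemma H3_Piez: "h \<in> H3 \<Longrightarrow> h \<in> Piez" unfolding H3_def Piez_def by auto

lemma orb_Sigma:
  assumes g: "orthogonal_matrix g" shows "tact g (\<lambda>i j k. c * Xt i j k) \<in> Sigma_Ominus"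
proof -
  let ?Y = "tact g (\<lambda>i j k. c * Xt i j k)"
  have "?Y \<in> Piez" using H3_Piez T_tact[OF g scale_H3[OF Xt_H3] scale_d2'[OF Xt_d2']] by simp
  moreover have "tact (g ** k ** transpose g) ?Y = ?Y" if k: "k \<in> Ominus" for k
  proof -
    have "tact (g ** k ** transpose g) ?Y = tact (g ** k ** (transpose g ** g)) (\<lambda>i j k. c * Xt i j k)"
      unfolding tact_comp by (simp add: matrix_mul_assoc)
    also have "\<dots> = tact g (tact k (\<lambda>i j k. c * Xt i j k))"
      unfolding tact_comp orth_tt[OF g] matrix_mul_rid ..
    also have "\<dots> = ?Y" unfolding tact_scale tact_Xt[OF k] ..
    finally show ?thesis .
  qed
  ultimately show ?thesis using g unfolding Sigma_Ominus_def by blast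
qed



lemma canon:
  assumes "h \<in> H3"
  shows "h 1 2 1 = h 1 1 2" "h 2 1 1 = h 1 1 2" "h 1 3 1 = h 1 1 3" "h 3 1 1 = h 1 1 3"
    "h 2 1 2 = h 1 2 2" "h 2 2 1 = h 1 2 2" "h 1 3 2 = h 1 2 3" "h 2 1 3 = h 1 2 3"
    "h 2 3 1 = h 1 2 3" "h 3 1 2 = h 1 2 3" "h 3 2 1 = h 1 2 3" "h 3 1 3 = h 1 3 3"
    "h 3 3 1 = h 1 3 3" "h 2 3 2 = h 2 2 3" "h 3 2 2 = h 2 2 3" "h 3 2 3 = h 2 3 3" "h 3 3 2 = h 2 3 3"
  using assms unfolding H3_def by auto

lemma H3_tr:
  assumes "h \<in> H3"
  shows "h 1 1 1 + h 1 2 2 + h 1 3 3 = 0" "h 1 1 2 + h 2 2 2 + h 2 3 3 = 0" "h 1 1 3 + h 2 2 3 + h 3 3 3 = 0"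
proof -
  have t: "(\<Sum>k\<in>UNIV. h i k k) = 0" for i using assms by (auto simp: H3_def)
  show "h 1 1 1 + h 1 2 2 + h 1 3 3 = 0" using t[of 1] by (simp add: sum_3)
  show "h 1 1 2 + h 2 2 2 + h 2 3 3 = 0" using t[of 2] by (simp add: sum_3 canon[OF assms])
  show "h 1 1 3 + h 2 2 3 + h 3 3 3 = 0" using t[of 3] by (simp add: sum_3 canon[OF assms])
qed

lemma d2_eq:
  assumes "d2' h = (\<lambda>i j. 0)"
  shows "d2 h 1 1 = d2 h 3 3" "d2 h 2 2 = d2 h 3 3" "d2 h 1 2 = 0" "d2 h 1 3 = 0" "d2 h 2 3 = 0"
proof -
  have e: "d2 h i j = (\<Sum>k\<in>UNIV. d2 h k k) / 3 * kdelta i j" for i j using assms unfolding d2'_zero_iff by blast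
  show "d2 h 1 1 = d2 h 3 3" using e[of 1 1] e[of 3 3] by (simp add: kdelta_def)
  show "d2 h 2 2 = d2 h 3 3" using e[of 2 2] e[of 3 3] by (simp add: kdelta_def)
  show "d2 h 1 2 = 0" using e[of 1 2] by (simp add: kdelta_def)
  show "d2 h 1 3 = 0" using e[of 1 3] by (simp add: kdelta_def)
  show "d2 h 2 3 = 0" using e[of 2 3] by (simp add: kdelta_def)
qed


definition Rz :: "real \<Rightarrow> real \<Rightarrow> real^3^3" where
  "Rz u v = vector [vector [u,-v,0], vector [v,u,0], vector [0,0,1]]"

lemma Rz_orth: "u^2 + v^2 = 1 \<Longrightarrow> orthogonal_matrix (Rz u v)"
  unfolding orthogonal_matrix
  by (simp add: vec_eq_iff all3 matrix_matrix_mult_def transpose_def mat_def sum_3 Rz_def power2_eq_square algebra_simps)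

lemma half_angle:
  fixes s t :: real
  obtains u v where "u^2 + v^2 = 1" "-2 * sqrt (s^2+t^2) * u * v = s" "sqrt (s^2+t^2) * (u^2 - v^2) = t"
proof (cases "s = 0 \<and> t = 0")
  case True then show ?thesis using that[of 1 0] by simp
next
  case False
  define r where "r = sqrt (s^2+t^2)"
  have r0: "r > 0" using False unfolding r_def by (auto simp: add_pos_nonneg add_nonneg_pos)
  have rr: "r^2 = s^2 + t^2" unfolding r_def by simp
  have rp: "s^2 + t^2 \<noteq> 0" using r0 rr by (metis power_not_zero less_irrefl)
  have "(t/r)^2 + (-s/r)^2 = 1" using rp by (simp add: power_divide rr add_divide_distrib[symmetric] add.commute)
  then obtain p where p: "t/r = cos p" "-s/r = sin p" by (rule sincos_total_2pi) auto
  have "(cos (p/2))^2 + (sin (p/2))^2 = 1" by simp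
  moreover have "-2 * r * cos (p/2) * sin (p/2) = s"
  proof -
    have "sin p = 2 * sin (p/2) * cos (p/2)" using sin_double[of "p/2"] by simp
    then show ?thesis using p(2) r0 by (simp add: field_simps)
  qed
  moreover have "r * ((cos (p/2))^2 - (sin (p/2))^2) = t"
  proof -
    have cp: "cos p = (cos (p/2))^2 - (sin (p/2))^2" using cos_double[of "p/2"] by simp
    have "t = r * cos p" using p(1) r0 by (simp add: field_simps)
    then show ?thesis by (simp add: cp)
  qed
  ultimately show ?thesis using that[of "cos (p/2)" "sin (p/2)"] unfolding r_def by blast
qed

definition inorb :: "tensor3 \<Rightarrow> bool" where
  "inorb h \<longleftrightarrow> (\<exists>g c. orthogonal_matrix g \<and> h = tact g (\<lambda>i j k. c * Xt i j k))"

lemma Z0: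
  assumes h: "h \<in> H3" and z: "d2' h = (\<lambda>i j. 0)"
    and h0: "h 1 3 3 = 0" "h 2 3 3 = 0" "h 3 3 3 = 0"
  shows "inorb h"
proof -
  note cn = canon[OF h]
  note tr = H3_tr[OF h]
  have sub: "h 1 2 2 = - h 1 1 1" "h 1 1 2 = - h 2 2 2" "h 2 2 3 = - h 1 1 3" using tr h0 by linarith+
  have "d2 h 1 1 = d2 h 3 3" using d2_eq[OF z] by simp
  then have "h 1 1 1 * h 1 1 1 + (h 1 1 3 * h 1 1 3 + (2 * (h 2 2 2 * h 2 2 2) + h 1 1 1 * h 1 1 1)) = h 1 1 3 * h 1 1 3"
    by (simp add: d2_def sum_3 cn h0 sub)
  then have "h 1 1 1 * h 1 1 1 + h 2 2 2 * h 2 2 2 = 0" by linarith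
  then have ab: "h 1 1 1 = 0" "h 2 2 2 = 0" by (simp_all add: sum_squares_eq_zero_iff)
  define s where "s = h 1 1 3"
  define t where "t = h 1 2 3"
  obtain u v where uv: "u^2 + v^2 = 1" "-2 * sqrt (s^2+t^2) * u * v = s" "sqrt (s^2+t^2) * (u^2 - v^2) = t"
    by (rule half_angle)
  define c where "c = sqrt (s^2+t^2)"
  have v1: "h 1 1 3 = -2 * c * u * v" "h 1 2 3 = c * (u^2 - v^2)" "h 2 2 3 = 2 * c * u * v"
    "h 1 2 2 = 0" "h 1 1 2 = 0" "h 1 1 1 = 0" "h 2 2 2 = 0"
    using uv tr h0 ab unfolding s_def t_def c_def by auto
  have "h = tact (Rz u v) (\<lambda>i j k. c * Xt i j k)"
  proof (intro ext)
    fix i j k :: 3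
    show "h i j k = tact (Rz u v) (\<lambda>i j k. c * Xt i j k) i j k"
      using exhaust_3[of i] exhaust_3[of j] exhaust_3[of k]
      by (elim disjE) (simp_all add: tact_def sum_3 Xt_def Rz_def cn h0 v1 power2_eq_square algebra_simps)
  qed
  then show ?thesis unfolding inorb_def using Rz_orth[OF uv(1)] by blast
qed



definition Tf :: "tensor3 \<Rightarrow> real^3 \<Rightarrow> real^3 \<Rightarrow> real^3 \<Rightarrow> real" where
  "Tf h x y z = (\<Sum>i\<in>UNIV. \<Sum>j\<in>UNIV. \<Sum>k\<in>UNIV. h i j k * x$i * y$j * z$k)"

lemma sum_axis: "(\<Sum>i\<in>UNIV. F i * (axis a 1 :: real^3)$i) = F a"
proof -
  have "(\<Sum>i\<in>UNIV. F i * (axis a 1 :: real^3)$i) = (\<Sum>i\<in>UNIV. if a = i then F i else 0)"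
    by (rule sum.cong) (auto simp: axis_def)
  then show ?thesis by simp
qed

lemma Tf_axis: "Tf h (axis i 1) (axis j 1) (axis k 1) = h i j k"
  unfolding Tf_def by (simp add: sum_axis sum_distrib_right[symmetric])

lemma swap33: "(\<Sum>i\<in>U. \<Sum>j\<in>U. \<Sum>k\<in>U. \<Sum>a\<in>V. \<Sum>b\<in>V. \<Sum>c\<in>V. F i j k a b c) =
   (\<Sum>a\<in>V. \<Sum>b\<in>V. \<Sum>c\<in>V. \<Sum>i\<in>U. \<Sum>j\<in>U. \<Sum>k\<in>U. F i j k a b c)"
proof -
  have "(\<Sum>i\<in>U. \<Sum>j\<in>U. \<Sum>k\<in>U. \<Sum>a\<in>V. \<Sum>b\<in>V. \<Sum>c\<in>V. F i j k a b c) =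
     (\<Sum>i\<in>U. \<Sum>j\<in>U. \<Sum>a\<in>V. \<Sum>b\<in>V. \<Sum>c\<in>V. \<Sum>k\<in>U. F i j k a b c)"
    by (intro sum.cong refl swap_out3)
  also have "\<dots> = (\<Sum>i\<in>U. \<Sum>a\<in>V. \<Sum>b\<in>V. \<Sum>c\<in>V. \<Sum>j\<in>U. \<Sum>k\<in>U. F i j k a b c)"
    by (intro sum.cong refl swap_out3)
  also have "\<dots> = (\<Sum>a\<in>V. \<Sum>b\<in>V. \<Sum>c\<in>V. \<Sum>i\<in>U. \<Sum>j\<in>U. \<Sum>k\<in>U. F i j k a b c)"
    by (rule swap_out3)
  finally show ?thesis .
qed

lemma Tf_tact: "Tf (tact (transpose g) h) x y z = Tf h (g *v x) (g *v y) (g *v z)"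
proof -
  have "Tf (tact (transpose g) h) x y z = (\<Sum>i\<in>UNIV. \<Sum>j\<in>UNIV. \<Sum>k\<in>UNIV. \<Sum>a\<in>UNIV. \<Sum>b\<in>UNIV. \<Sum>c\<in>UNIV.
      h a b c * (g$a$i * x$i) * (g$b$j * y$j) * (g$c$k * z$k))"
    unfolding Tf_def tact_def transpose_def by (simp add: sum_distrib_left sum_distrib_right mult_ac)
  also have "\<dots> = (\<Sum>a\<in>UNIV. \<Sum>b\<in>UNIV. \<Sum>c\<in>UNIV. \<Sum>i\<in>UNIV. \<Sum>j\<in>UNIV. \<Sum>k\<in>UNIV.
      h a b c * (g$a$i * x$i) * (g$b$j * y$j) * (g$c$k * z$k))"
    by (rule swap33)
  also have "\<dots> = Tf h (g *v x) (g *v y) (g *v z)"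
    unfolding Tf_def matrix_vector_mult_def by (simp add: sum_distrib_left sum_distrib_right mult_ac)
  finally show ?thesis .
qed

lemma Tf_scale: "Tf h (a *\<^sub>R x) (b *\<^sub>R y) (c *\<^sub>R z) = a * b * c * Tf h x y z"
  unfolding Tf_def by (simp add: sum_distrib_left mult_ac)

lemma Tf_q0: "(\<forall>k. (\<Sum>i\<in>UNIV. \<Sum>j\<in>UNIV. h i j k * x$i * x$j) = 0) \<Longrightarrow> Tf h x x z = 0"
proof -
  assume q: "\<forall>k. (\<Sum>i\<in>UNIV. \<Sum>j\<in>UNIV. h i j k * x$i * x$j) = 0"
  have "Tf h x x z = (\<Sum>i\<in>UNIV. \<Sum>j\<in>UNIV. \<Sum>k\<in>UNIV. h i j k * x$i * x$j * z$k)" unfolding Tf_def ..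
  also have "\<dots> = (\<Sum>k\<in>UNIV. \<Sum>i\<in>UNIV. \<Sum>j\<in>UNIV. h i j k * x$i * x$j * z$k)" by (rule swap_out2[symmetric])
  also have "\<dots> = (\<Sum>k\<in>UNIV. (\<Sum>i\<in>UNIV. \<Sum>j\<in>UNIV. h i j k * x$i * x$j) * z$k)" by (simp add: sum_distrib_right)
  also have "\<dots> = 0" using q by simp
  finally show ?thesis .
qed

lemma orth_norm: "orthogonal_matrix g \<Longrightarrow> norm (g *v x) = norm (x::real^3)"
  using orthogonal_transformation_matrix[of "\<lambda>x. g *v x"]
  by (simp add: orthogonal_transformation_norm)

lemma inorb_tact: "orthogonal_matrix g \<Longrightarrow> inorb h \<Longrightarrow> inorb (tact g h)"
  unfolding inorb_def by (metis tact_comp orthogonal_matrix_mul)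

lemma cont_Tf: "continuous_on S (\<lambda>x. Tf h x x x)"
  unfolding Tf_def by (intro continuous_intros)



lemma cube_root_complex: "\<exists>z::complex. z^3 = w"
proof -
  let ?z = "rcis (root 3 (cmod w)) (Arg w / 3)"
  have "?z^3 = rcis (root 3 (cmod w) ^ 3) (real 3 * (Arg w / 3))" by (rule DeMoivre2)
  also have "\<dots> = w" by (simp add: rcis_cmod_Arg)
  finally show ?thesis by blast
qed

lemma Zmu:
  assumes h: "h \<in> H3" and z: "d2' h = (\<lambda>i j. 0)"
    and h0: "h 1 3 3 = 0" "h 2 3 3 = 0" and mu: "h 3 3 3 = \<mu>" "\<mu> \<noteq> 0"
  shows "\<exists>y::real^3. y \<noteq> 0 \<and> (\<forall>k. (\<Sum>i\<in>UNIV. \<Sum>j\<in>UNIV. h i j k * y$i * y$j) = 0)"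
proof -
  note cn = canon[OF h]
  note tr = H3_tr[OF h]
  define a where "a = h 1 1 1"
  define b where "b = h 2 2 2"
  define w3 where "w3 = h 1 1 3"
  define t where "t = h 1 2 3"
  have sub: "h 1 2 2 = - a" "h 1 1 2 = - b" "h 2 2 3 = - \<mu> - w3" "h 1 1 1 = a" "h 2 2 2 = b" "h 1 1 3 = w3" "h 1 2 3 = t"
    using tr h0 mu unfolding a_def b_def w3_def by linarith+ (simp add: t_def)
  note E = d2_eq[OF z]
  have e12: "d2 h 1 2 = -2 * t * \<mu>"
    by (simp add: d2_def sum_3 cn h0 mu sub algebra_simps)
  then have t0: "t = 0" using E(3) mu(2) by simp
  have e11: "d2 h 1 1 = 2*a^2 + 2*b^2 + 2*w3^2 + 2*t^2"
    by (simp add: d2_def sum_3 cn h0 mu sub power2_eq_square algebra_simps)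
  have e22: "d2 h 2 2 = 2*a^2 + 2*b^2 + 2*t^2 + 2*(\<mu>+w3)^2"
    by (simp add: d2_def sum_3 cn h0 mu sub power2_eq_square algebra_simps)
  have e33: "d2 h 3 3 = w3^2 + (\<mu>+w3)^2 + \<mu>^2 + 2*t^2"
    by (simp add: d2_def sum_3 cn h0 mu sub power2_eq_square algebra_simps)
  have "\<mu> * (\<mu> + 2*w3) = 0" using E(1) E(2) e11 e22 by (simp add: power2_eq_square algebra_simps)
  then have "\<mu> + 2*w3 = 0" using mu(2) by simp
  then have s0: "w3 = - \<mu>/2" by simp
  have ab: "a^2 + b^2 = \<mu>^2/2" using E(1) e11 e33 s0 t0 by (simp add: power2_eq_square field_simps)
  obtain z :: complex where zz: "z^3 = Complex (4*a/\<mu>) (-4*b/\<mu>)" using cube_root_complex by blast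
  define x1 where "x1 = Re z"
  define x2 where "x2 = Im z"
  have R: "x1^3 - 3*x1*x2^2 = 4*a/\<mu>" and I: "3*x1^2*x2 - x2^3 = -4*b/\<mu>"
  proof -
    have "Re (z^3) = x1^3 - 3*x1*x2^2" "Im (z^3) = 3*x1^2*x2 - x2^3"
      unfolding x1_def x2_def by (simp_all add: power3_eq_cube power2_eq_square algebra_simps)
    then show "x1^3 - 3*x1*x2^2 = 4*a/\<mu>" "3*x1^2*x2 - x2^3 = -4*b/\<mu>" using zz by simp_all
  qed
  have "(x1^2+x2^2)^3 = (x1^3 - 3*x1*x2^2)^2 + (3*x1^2*x2 - x2^3)^2" by (simp add: power2_eq_square power3_eq_cube algebra_simps)
  also have "\<dots> = 16 * (a^2+b^2) / \<mu>^2" unfolding R I by (simp add: power_divide add_divide_distrib algebra_simps)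
  also have "\<dots> = 8" using ab mu(2) by (simp add: field_simps)
  finally have r3: "(x1^2+x2^2)^3 = 8" .
  have r2: "x1^2 + x2^2 = 2"
  proof -
    define r where "r = x1^2 + x2^2"
    have r0: "r \<ge> 0" unfolding r_def by simp
    have "(r - 2) * (r^2 + 2*r + 4) = r^3 - 8" by (simp add: power2_eq_square power3_eq_cube algebra_simps)
    then have "(r - 2) * (r^2 + 2*r + 4) = 0" using r3 unfolding r_def[symmetric] by simp
    moreover have "r^2 + 2*r + 4 > 0" using r0 by (simp add: add_nonneg_pos)
    ultimately show ?thesis unfolding r_def by simp
  qed
  have aR: "a = \<mu> * (x1^3 - 3*x1*x2^2) / 4" using R mu(2) by (simp add: field_simps)
  have bI: "b = - \<mu> * (3*x1^2*x2 - x2^3) / 4" using I mu(2) by (simp add: field_simps)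
  define y :: "real^3" where "y = vector [x1, x2, 1]"
  have "y \<noteq> 0" unfolding y_def by (metis vector_3(3) zero_index zero_neq_one)
  moreover have "(\<Sum>i\<in>UNIV. \<Sum>j\<in>UNIV. h i j k * y$i * y$j) = 0" for k
  proof -
    have q1: "a*(x1^2-x2^2) - 2*b*x1*x2 - \<mu>*x1 = \<mu>/4 * x1 * ((x1^2+x2^2)^2 - 4)"
      unfolding aR bI by (simp add: power2_eq_square power3_eq_cube field_simps)
    have q2: "-b*(x1^2-x2^2) - 2*a*x1*x2 - \<mu>*x2 = \<mu>/4 * x2 * ((x1^2+x2^2)^2 - 4)"
      unfolding aR bI by (simp add: power2_eq_square power3_eq_cube field_simps)
    have Q1: "a*(x1^2-x2^2) - 2*b*x1*x2 - \<mu>*x1 = 0" using q1 r2 by simp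
    have Q2: "-b*(x1^2-x2^2) - 2*a*x1*x2 - \<mu>*x2 = 0" using q2 r2 by simp
    have Q3: "-\<mu>/2 * (x1^2+x2^2) + \<mu> = 0" using r2 by simp
    show ?thesis
      using exhaust_3[of k] apply (elim disjE)
      using Q1 Q2 Q3 by (simp_all add: y_def sum_3 cn h0 mu sub s0 t0 power2_eq_square algebra_simps)
  qed
  ultimately show ?thesis by blast
qed



lemma deriv0:
  fixes A B C \<mu> :: real
  assumes le: "\<forall>t. 3*t*A + 3*t^2*B + t^3*C - \<mu>*(2*t^2+t^4) \<le> 0"
  shows "A = 0"
proof -
  let ?f = "\<lambda>t::real. 3*t*A + 3*t^2*B + t^3*C - \<mu>*(2*t^2+t^4)"
  have d: "(?f has_real_derivative 3*A) (at 0)"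
    by (rule derivative_eq_intros refl)+ simp
  have "3*A = 0"
    by (rule DERIV_local_max[OF d, of 1]) (use le in auto)
  then show ?thesis by simp
qed

lemma norm_v3: "(norm (vector [a,b,c] :: real^3))^2 = a^2 + b^2 + c^2"
  by (simp only: power2_norm_eq_inner) (simp add: inner_vec_def sum_3 power2_eq_square)

lemma cube_le: fixes \<mu> \<nu> t :: real shows "\<nu> \<ge> 0 \<Longrightarrow> \<nu>^2 = 1 + t^2 \<Longrightarrow> \<mu> \<ge> 0 \<Longrightarrow> \<mu> * \<nu>^3 \<le> \<mu> * (1 + t^2)^2"
proof -
  assume a: "\<nu> \<ge> 0" "\<nu>^2 = 1 + t^2" "\<mu> \<ge> (0::real)"
  have "\<nu> \<ge> 1" using a by (metis abs_of_nonneg le_add_same_cancel1 real_sqrt_abs real_sqrt_ge_one zero_le_power2)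
  then have "\<nu>^3 \<le> \<nu>^3 * \<nu>" using a by (simp add: mult_le_cancel_left1)
  also have "\<dots> = (\<nu>^2)^2" by (simp add: power2_eq_square power3_eq_cube)
  finally show ?thesis using a by (simp add: mult_left_mono)
qed

lemma MaxRot:
  assumes h: "h \<in> H3"
  shows "\<exists>g. orthogonal_matrix g \<and> tact (transpose g) h 1 3 3 = 0 \<and> tact (transpose g) h 2 3 3 = 0"
proof -
  obtain n where n: "n \<in> sphere (0::real^3) 1" and nmax: "\<forall>y\<in>sphere 0 1. Tf h y y y \<le> Tf h n n n"
    using continuous_attains_sup[OF compact_sphere _ cont_Tf, of 0 1 h] by (auto simp: sphere_eq_empty)
  have n1: "norm n = 1" using n by simp
  obtain g where g: "orthogonal_matrix g" "g *v axis 3 1 = n"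
    using orthogonal_matrix_exists_basis[OF n1] by metis
  define h' where "h' = tact (transpose g) h"
  define \<mu> where "\<mu> = Tf h n n n"
  have h'H: "h' \<in> H3" unfolding h'_def by (rule tact_H3[OF _ h]) (simp add: g)
  note cn = canon[OF h'H]
  have key: "Tf h' x x x \<le> \<mu> * norm x ^ 3" for x
  proof -
    have e: "Tf h' x x x = Tf h (g *v x) (g *v x) (g *v x)" unfolding h'_def Tf_tact ..
    show ?thesis
    proof (cases "x = 0")
      case True then show ?thesis by (simp add: Tf_def)
    next
      case False
      define y where "y = g *v x"
      have ny: "norm y = norm x" unfolding y_def by (rule orth_norm[OF g(1)])
      have np: "norm y > 0" using False ny by simp
      define u where "u = (1 / norm y) *\<^sub>R y"
      have u: "u \<in> sphere 0 1" using np unfolding u_def by (simp add: norm_scaleR)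
      have yu: "y = norm y *\<^sub>R u" using np unfolding u_def by simp
      have "Tf h y y y = norm y ^ 3 * Tf h u u u"
        by (subst yu, subst yu, subst yu) (simp add: Tf_scale power3_eq_cube)
      also have "\<dots> \<le> norm y ^ 3 * \<mu>" using nmax u unfolding \<mu>_def by (simp add: mult_left_mono)
      finally show ?thesis using e ny unfolding y_def by (simp add: mult.commute)
    qed
  qed
  have mu0: "\<mu> \<ge> 0"
  proof -
    have "Tf h (-n) (-n) (-n) \<le> \<mu>" using nmax n unfolding \<mu>_def by auto
    moreover have "Tf h (-n) (-n) (-n) = - \<mu>"
      using Tf_scale[of h "-1" n "-1" n "-1" n] unfolding \<mu>_def by simp
    ultimately show ?thesis by simp
  qed
  have m3: "h' 3 3 3 = \<mu>"
    using Tf_axis[of h' 3 3 3] unfolding h'_def Tf_tact g(2) \<mu>_def by simp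
  have A1: "h' 1 3 3 = 0"
  proof (rule deriv0[of _ "h' 1 1 3" "h' 1 1 1" \<mu>], intro allI)
    fix t :: real
    have sq: "\<mu> * (1 + t^2)^2 = \<mu> + \<mu>*(2*t^2+t^4)" by (simp add: power2_eq_square power4_eq_xxxx algebra_simps)
    have "Tf h' (vector [t,0,1]) (vector [t,0,1]) (vector [t,0,1]) = h' 3 3 3 + 3*t*h' 1 3 3 + 3*t^2*h' 1 1 3 + t^3 * h' 1 1 1"
      by (simp add: Tf_def sum_3 cn power2_eq_square power3_eq_cube algebra_simps)
    moreover have "\<mu> * norm (vector [t,0,1] :: real^3) ^ 3 \<le> \<mu> * (1 + t^2)^2"
      by (rule cube_le) (simp_all add: norm_v3 mu0)
    ultimately show "3*t*h' 1 3 3 + 3*t^2*h' 1 1 3 + t^3*h' 1 1 1 - \<mu>*(2*t^2+t^4) \<le> 0"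
      using key[of "vector [t,0,1]"] m3 sq by linarith
  qed
  have A2: "h' 2 3 3 = 0"
  proof (rule deriv0[of _ "h' 2 2 3" "h' 2 2 2" \<mu>], intro allI)
    fix t :: real
    have sq: "\<mu> * (1 + t^2)^2 = \<mu> + \<mu>*(2*t^2+t^4)" by (simp add: power2_eq_square power4_eq_xxxx algebra_simps)
    have "Tf h' (vector [0,t,1]) (vector [0,t,1]) (vector [0,t,1]) = h' 3 3 3 + 3*t*h' 2 3 3 + 3*t^2*h' 2 2 3 + t^3 * h' 2 2 2"
      by (simp add: Tf_def sum_3 cn power2_eq_square power3_eq_cube algebra_simps)
    moreover have "\<mu> * norm (vector [0,t,1] :: real^3) ^ 3 \<le> \<mu> * (1 + t^2)^2"
      by (rule cube_le) (simp_all add: norm_v3 mu0)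
    ultimately show "3*t*h' 2 3 3 + 3*t^2*h' 2 2 3 + t^3*h' 2 2 2 - \<mu>*(2*t^2+t^4) \<le> 0"
      using key[of "vector [0,t,1]"] m3 sq by linarith
  qed
  show ?thesis using g A1 A2 unfolding h'_def by blast
qed


lemma T_orb:
  assumes h: "h \<in> H3" and z: "d2' h = (\<lambda>i j. 0)"
  shows "inorb h"
proof -
  obtain g where g: "orthogonal_matrix g" and A: "tact (transpose g) h 1 3 3 = 0" "tact (transpose g) h 2 3 3 = 0"
    using MaxRot[OF h] by blast
  define h' where "h' = tact (transpose g) h"
  have gt: "orthogonal_matrix (transpose g)" using g by simp
  have h'H: "h' \<in> H3" and h'z: "d2' h' = (\<lambda>i j. 0)" unfolding h'_def using T_tact[OF gt h z] by auto
  have hh: "h = tact g h'" unfolding h'_def tact_comp orth_tt[OF g] tact_id ..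
  have "inorb h'"
  proof (cases "h' 3 3 3 = 0")
    case True then show ?thesis using Z0[OF h'H h'z] A unfolding h'_def by simp
  next
    case False
    obtain y where y: "y \<noteq> 0" "\<forall>k. (\<Sum>i\<in>UNIV. \<Sum>j\<in>UNIV. h' i j k * y$i * y$j) = 0"
      using Zmu[OF h'H h'z _ _ refl False] A unfolding h'_def by blast
    define m where "m = (1 / norm y) *\<^sub>R y"
    have m1: "norm m = 1" using y(1) unfolding m_def by (simp add: norm_scaleR)
    obtain g2 where g2: "orthogonal_matrix g2" "g2 *v axis 3 1 = m"
      using orthogonal_matrix_exists_basis[OF m1] by metis
    define h'' where "h'' = tact (transpose g2) h'"
    have g2t: "orthogonal_matrix (transpose g2)" using g2 by simp
    have h''H: "h'' \<in> H3" and h''z: "d2' h'' = (\<lambda>i j. 0)" unfolding h''_def using T_tact[OF g2t h'H h'z] by auto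
    have zero: "h'' 3 3 k = 0" for k
    proof -
      have "h'' 3 3 k = Tf h' m m (g2 *v axis k 1)"
        using Tf_axis[of h'' 3 3 k] unfolding h''_def Tf_tact g2(2) by simp
      also have "\<dots> = (1 / norm y) * (1 / norm y) * 1 * Tf h' y y (g2 *v axis k 1)"
        unfolding m_def using Tf_scale[of h' "1 / norm y" y "1 / norm y" y 1 "g2 *v axis k 1"] by simp
      also have "\<dots> = 0" using Tf_q0[OF y(2)] by simp
      finally show ?thesis .
    qed
    have "inorb h''" using Z0[OF h''H h''z] zero canon[OF h''H] by simp
    moreover have "h' = tact g2 h''" unfolding h''_def tact_comp orth_tt[OF g2(1)] tact_id ..
    ultimately show ?thesis using inorb_tact[OF g2(1)] by simp
  qed
  then show ?thesis unfolding hh by (rule inorb_tact[OF g])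
qed

lemma Sigma_eq_T: "Sigma_Ominus = {h \<in> H3. d2' h = (\<lambda>i j. 0)}"
proof
  show "Sigma_Ominus \<subseteq> {h \<in> H3. d2' h = (\<lambda>i j. 0)}" using Sigma_sub_T by blast
  show "{h \<in> H3. d2' h = (\<lambda>i j. 0)} \<subseteq> Sigma_Ominus"
    using T_orb orb_Sigma unfolding inorb_def by blast
qed



definition tinner :: "tensor3 \<Rightarrow> tensor3 \<Rightarrow> real" where
  "tinner a b = (\<Sum>i\<in>UNIV. \<Sum>j\<in>UNIV. \<Sum>k\<in>UNIV. a i j k * b i j k)"

lemma piez_canon:
  assumes "e \<in> Piez"
  shows "e 1 2 1 = e 1 1 2" "e 1 3 1 = e 1 1 3" "e 1 3 2 = e 1 2 3"
        "e 2 2 1 = e 2 1 2" "e 2 3 1 = e 2 1 3" "e 2 3 2 = e 2 2 3"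
        "e 3 2 1 = e 3 1 2" "e 3 3 1 = e 3 1 3" "e 3 3 2 = e 3 2 3"
  using assms unfolding Piez_def by auto

lemma H3_tr':
  assumes "h \<in> H3"
  shows "h 1 1 1 = - h 1 2 2 - h 1 3 3" "h 2 2 2 = - h 1 1 2 - h 2 3 3" "h 3 3 3 = - h 1 1 3 - h 2 2 3"
  using H3_tr[OF assms] by linarith+

lemma tin_sym:
  assumes e: "e \<in> Piez" and s: "s \<in> H3"
  shows "tinner (tsym e) s = tinner e s"
  unfolding tinner_def tsym_def
  by (simp add: sum_3 canon[OF s] piez_canon[OF e] field_simps)

lemma tin_q:
  assumes s: "s \<in> H3"
  shows "tinner (qodot u) s = 0"
  unfolding tinner_def qodot_def kdelta_def
  by (simp add: sum_3 canon[OF s] H3_tr'[OF s] field_simps)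

lemma harm_orth:
  assumes e: "e \<in> Piez" and s: "s \<in> H3"
  shows "tinner (e - harm_part e) s = 0"
proof -
  have "tinner (e - harm_part e) s = tinner e s - tinner (tsym e) s + 3/5 * tinner (qodot (tvec_u e)) s"
    unfolding tinner_def harm_part_def
    by (simp add: sum_subtractf sum.distrib sum_distrib_left algebra_simps)
  then show ?thesis using tin_sym[OF e s] tin_q[OF s] by simp
qed


lemma kdelta_sym: "kdelta i j = kdelta j i" unfolding kdelta_def by auto

lemma harm_H3:
  assumes e: "e \<in> Piez" shows "harm_part e \<in> H3"
proof -
  have p: "e i j k = e i k j" for i j k using e by (auto simp: Piez_def)
  have A: "harm_part e i j k = harm_part e j i k" for i j k
    unfolding harm_part_def tsym_def qodot_def by (simp add: kdelta_sym[of j i] p[of k i j] algebra_simps)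
  have B: "harm_part e i j k = harm_part e i k j" for i j k
    unfolding harm_part_def tsym_def qodot_def
    by (simp add: kdelta_sym[of k j] p[of i k j] p[of k i j] p[of j k i] algebra_simps)
  have C: "(\<Sum>k\<in>UNIV. harm_part e i k k) = 0" for i
    using exhaust_3[of i] apply (elim disjE)
    by (simp_all add: harm_part_def tsym_def qodot_def kdelta_def tvec_u_def sum_3 field_simps)
  show ?thesis using A B C by (auto simp: H3_def)
qed

lemma H3_diff: "a \<in> H3 \<Longrightarrow> b \<in> H3 \<Longrightarrow> a - b \<in> H3"
  unfolding H3_def by (auto simp: sum_subtractf)

lemma tnorm2_add: "tnorm2 (\<lambda>i j k. a i j k + b i j k) = tnorm2 a + tnorm2 b + 2 * tinner a b"
  unfolding tnorm2_def tinner_def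
  by (simp add: power2_sum sum.distrib sum_distrib_left algebra_simps)

lemma tnorm2_lin: "tnorm2 (\<lambda>i j k. a i j k - c * Y i j k) = tnorm2 a - 2 * c * tinner a Y + c^2 * tnorm2 Y"
  unfolding tnorm2_def tinner_def
  by (simp add: power2_diff sum_subtractf sum.distrib sum_distrib_left power_mult_distrib algebra_simps)

lemma tnorm2_Xt: "tnorm2 Xt = 6"
  unfolding tnorm2_def Xt_def by (simp add: sum_3)

lemma decomp:
  assumes e0: "e0 \<in> Piez" and e: "e \<in> H3"
  shows "tnorm2 (e0 - e) = tnorm2 (e0 - harm_part e0) + tnorm2 (harm_part e0 - e)"
proof -
  have "e0 - e = (\<lambda>i j k. (e0 - harm_part e0) i j k + (harm_part e0 - e) i j k)" by (simp add: fun_eq_iff)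
  then have "tnorm2 (e0 - e) = tnorm2 (e0 - harm_part e0) + tnorm2 (harm_part e0 - e) + 2 * tinner (e0 - harm_part e0) (harm_part e0 - e)"
    by (subst \<open>e0 - e = _\<close>) (rule tnorm2_add)
  moreover have "tinner (e0 - harm_part e0) (harm_part e0 - e) = 0"
    by (rule harm_orth[OF e0 H3_diff[OF harm_H3[OF e0] e]])
  ultimately show ?thesis by linarith
qed

lemma compact_orth: "compact {g :: real^3^3. orthogonal_matrix g}"
proof (subst compact_eq_bounded_closed, intro conjI)
  show "bounded {g :: real^3^3. orthogonal_matrix g}"
  proof (rule boundedI)
    fix g :: "real^3^3" assume "g \<in> {g. orthogonal_matrix g}"
    then have "\<forall>i. norm (row i g) = 1" by (simp add: orthogonal_matrix_orthonormal_rows)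
    then have r: "norm (g $ i) = 1" for i by (simp add: row_def vec_lambda_eta)
    have "norm g \<le> (\<Sum>i\<in>UNIV. norm (g$i))" unfolding norm_vec_def by (rule L2_set_le_sum) simp
    also have "\<dots> = 3" by (simp add: r)
    finally show "norm g \<le> 3" .
  qed
  have eq: "{g :: real^3^3. orthogonal_matrix g} = {g. \<forall>a b. (\<Sum>k\<in>UNIV. g$k$a * g$k$b) = (if a = b then 1 else 0)}"
    by (auto simp: orthogonal_matrix vec_eq_iff matrix_matrix_mult_def transpose_def mat_def)
  show "closed {g :: real^3^3. orthogonal_matrix g}"
    unfolding eq by (intro closed_Collect_all closed_Collect_eq continuous_intros)
qed



lemma min_exists:
  fixes a :: tensor3
  shows "\<exists>h\<in>{h \<in> H3. d2' h = (\<lambda>i j. 0)}. \<forall>h'\<in>{h \<in> H3. d2' h = (\<lambda>i j. 0)}. tnorm2 (a - h) \<le> tnorm2 (a - h')"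
proof -
  let ?O = "{g :: real^3^3. orthogonal_matrix g}"
  let ?\<phi> = "\<lambda>g. (tinner a (tact g Xt))^2"
  have cont: "continuous_on ?O ?\<phi>" unfolding tinner_def tact_def by (intro continuous_intros)
  have ne: "?O \<noteq> {}" using orthogonal_matrix_id by blast
  obtain gs where gs: "orthogonal_matrix gs" and gmax: "\<forall>g. orthogonal_matrix g \<longrightarrow> ?\<phi> g \<le> ?\<phi> gs"
    using continuous_attains_sup[OF compact_orth ne cont] by auto
  define ts where "ts = tinner a (tact gs Xt)"
  define cs where "cs = ts / 6"
  define hs where "hs = tact gs (\<lambda>i j k. cs * Xt i j k)"
  have hsT: "hs \<in> H3 \<and> d2' hs = (\<lambda>i j. 0)"
    unfolding hs_def using T_tact[OF gs scale_H3[OF Xt_H3] scale_d2'[OF Xt_d2']] by simp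
  have val: "tnorm2 (a - tact g (\<lambda>i j k. c * Xt i j k)) = tnorm2 a - 2 * c * tinner a (tact g Xt) + c^2 * 6"
    if g: "orthogonal_matrix g" for g c
  proof -
    have "a - tact g (\<lambda>i j k. c * Xt i j k) = (\<lambda>i j k. a i j k - c * tact g Xt i j k)"
      by (simp add: tact_scale fun_eq_iff)
    then show ?thesis using tnorm2_lin[of a c "tact g Xt"] tnorm2_tact[OF g, of Xt] tnorm2_Xt by simp
  qed
  have "tnorm2 (a - hs) \<le> tnorm2 (a - h')" if h': "h' \<in> H3" "d2' h' = (\<lambda>i j. 0)" for h'
  proof -
    obtain g c where g: "orthogonal_matrix g" and hh: "h' = tact g (\<lambda>i j k. c * Xt i j k)"
      using T_orb[OF h'] unfolding inorb_def by blast
    define t where "t = tinner a (tact g Xt)"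
    have tt: "t^2 \<le> ts^2" using gmax g unfolding t_def ts_def by blast
    have sq: "0 \<le> (6*c - t)^2" by simp
    have sq': "(6*c - t)^2 = 36 * c^2 - 12 * (c * t) + t^2" by (simp add: power2_eq_square algebra_simps)
    have "tnorm2 (a - hs) = tnorm2 a - ts^2 / 6"
      unfolding hs_def val[OF gs] cs_def ts_def[symmetric] by (simp add: power2_eq_square)
    also have "\<dots> \<le> tnorm2 a - 2 * c * t + c^2 * 6" using tt sq sq' mult.assoc[of 2 c t] by linarith
    also have "\<dots> = tnorm2 (a - h')" unfolding hh val[OF g] t_def ..
    finally show ?thesis .
  qed
  then show ?thesis using hsT by blast
qed


theorem theorem7p2:
  fixes e0 :: tensor3
  assumes "e0 \<in> Piez"
  defines "h0 \<equiv> harm_part e0"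
  defines "g0 \<equiv> e0 - h0"
  defines "T \<equiv> {h \<in> H3. d2' h = (\<lambda>i j. 0)}"
  shows "(\<exists>e\<in>Sigma_Ominus. \<forall>e'\<in>Sigma_Ominus. tnorm2 (e0 - e) \<le> tnorm2 (e0 - e'))
       \<and> (\<exists>h\<in>T. \<forall>h'\<in>T. tnorm2 (h0 - h) \<le> tnorm2 (h0 - h'))
       \<and> (INF e\<in>Sigma_Ominus. tnorm2 (e0 - e)) = tnorm2 g0 + (INF h\<in>T. tnorm2 (h0 - h))
       \<and> (\<forall>e. (e \<in> Sigma_Ominus \<and> (\<forall>e'\<in>Sigma_Ominus. tnorm2 (e0 - e) \<le> tnorm2 (e0 - e')))
              \<longleftrightarrow> (e \<in> T \<and> (\<forall>h'\<in>T. tnorm2 (h0 - e) \<le> tnorm2 (h0 - h'))))"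
proof -
  have ST: "Sigma_Ominus = T" unfolding T_def by (rule Sigma_eq_T)
  have dec: "tnorm2 (e0 - e) = tnorm2 g0 + tnorm2 (h0 - e)" if "e \<in> T" for e
    using decomp[OF assms(1), of e] that unfolding T_def g0_def h0_def by simp
  obtain hs where hs: "hs \<in> T" and hmin: "\<forall>h'\<in>T. tnorm2 (h0 - hs) \<le> tnorm2 (h0 - h')"
    using min_exists[of h0] unfolding T_def by blast
  have emin: "\<forall>e'\<in>T. tnorm2 (e0 - hs) \<le> tnorm2 (e0 - e')"
    using hmin dec hs by simp
  have I1: "(INF e\<in>Sigma_Ominus. tnorm2 (e0 - e)) = tnorm2 (e0 - hs)"
    unfolding ST by (rule cInf_eq_minimum) (use hs emin in auto)
  have I2: "(INF h\<in>T. tnorm2 (h0 - h)) = tnorm2 (h0 - hs)"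
    by (rule cInf_eq_minimum) (use hs hmin in auto)
  have I4: "(e \<in> Sigma_Ominus \<and> (\<forall>e'\<in>Sigma_Ominus. tnorm2 (e0 - e) \<le> tnorm2 (e0 - e')))
              \<longleftrightarrow> (e \<in> T \<and> (\<forall>h'\<in>T. tnorm2 (h0 - e) \<le> tnorm2 (h0 - h')))" for e
    unfolding ST using dec by auto
  show ?thesis using hs hmin emin I1 I2 I4 dec unfolding ST by auto
qed


end
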